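(* Let $\theta$ be a labelled tree (as defined below) such that $\Psi_{n_\ell}(\omega\cdot\nu_\ell)\neq0$ for every line $\ell$ of $\theta$ with $n_\ell\ge0$, and let $T$ be a self-energy cluster of $\theta$ on scale $n\ge0$ which is renormalised, i.e. no subgraph of $T$ is a self-energy cluster of $\theta$. Then for every $0\le p\le n$, $$\mathfrak{N}_p(T)\le 2^{-(m_p-2)}K(T),$$ where $\mathfrak{N}_p(T)$ is the number of lines of $T$ with scale $\ge p$ and $K(T):=\sum_{v\in N(T)}|\nu_v|$, $N(T)$ being the set of nodes of $T$.
   Context: Notation: $\omega\in\mathbb{R}^d$ satisfies the Bryuno condition; $\alpha_m(\omega):=\inf_{0<|\nu|\le2^m}|\omega\cdot\nu|$ with $|\nu|$ the $\ell^1$ norm; $m_0=0$, $m_{n+1}=m_n+p_n+1$ with $p_n:=\max\{q\ge0:\alpha_{m_n}(\omega)<2\alpha_{m_n+q}(\omega)\}$. $\chi$ is an even $C^\infty$ function, non-increasing in $|x|$, equal to $1$ for $|x|\le1/2$ and $0$ for $|x|\ge1$; $\chi_{-1}\equiv1$, $\chi_n(x)=\chi(4x/\alpha_{m_n}(\omega))$, $\psi_n=1-\chi_n$ ($n\ge0$), $\Psi_n=\chi_{n-1}\psi_n$ ($n\ge0$); thus $\Psi_n(x)\neq0$ implies $\alpha_{m_n}(\omega)/8<|x|<\alpha_{m_{n-1}}(\omega)/4$ (with $\alpha_{m_{-1}}:=+\infty$). Trees: a tree $\theta$ is a finite rooted tree whose root has exactly one incident line (the root line); all other vertices are nodes; lines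 are oriented toward the root, and each line $\ell=\ell_v$ is identified with the node $v$ it leaves. Write $w\preceq v$ if $v$ lies on the path from $w$ to the root. Each node $v$ carries a mode $\nu_v\in\mathbb{Z}^d$; each line $\ell_v$ carries the momentum $\nu_{\ell_v}=\sum_{w\preceq v}\nu_w$, required to be nonzero for all lines except possibly the root line; each line carries a scale $n_\ell$, with $n_\ell=-1$ if $\nu_\ell=0$ and $n_\ell\in\{0,1,2,\dots\}$ otherwise. A cluster on scale $n$ is a maximal connected subgraph (set of nodes together with the lines of $\theta$ joining them) all of whose lines have scale $\le n$ and at least one line of which has scale $n$; a line enters (exits) a subgraph $T$ if it connects a node outside $T$ to a node in $T$ (a node in $T$ to a node outside). A self-energy cluster is either a cluster with exactly one entering line $\ell'$ and one exiting line $\ell$ satisfying $\nu_\ell=\nu_{\ell'}$, or (scale $-1$) a single node $v$ with $\nu_v=0$ having exactly one entering line. *)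

theory Defs
  imports "HOL-Analysis.Analysis"
begin

definition dotp :: "real^'d \<Rightarrow> int^'d \<Rightarrow> real" where
  "dotp \<omega> \<nu> = (\<Sum>i\<in>UNIV. \<omega>$i * real_of_int (\<nu>$i))"

definition norm1 :: "int^'d \<Rightarrow> int" where
  "norm1 \<nu> = (\<Sum>i\<in>UNIV. \<bar>\<nu>$i\<bar>)"

definition alpha :: "real^'d \<Rightarrow> nat \<Rightarrow> real" where
  "alpha \<omega> m = Inf {\<bar>dotp \<omega> \<nu>\<bar> | \<nu>. 0 < norm1 \<nu> \<and> norm1 \<nu> \<le> 2 ^ m}"

definition bryuno :: "real^'d \<Rightarrow> bool" where
  "bryuno \<omega> \<longleftrightarrow> (\<forall>\<nu>. \<nu> \<noteq> 0 \<longrightarrow> dotp \<omega> \<nu> \<noteq> 0)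
      \<and> summable (\<lambda>m. ln (1 / alpha \<omega> m) / 2 ^ m)"

text \<open>p_n as a function of m_n\<close>
definition pnum :: "real^'d \<Rightarrow> nat \<Rightarrow> nat" where
  "pnum \<omega> mn = (GREATEST q. alpha \<omega> mn < 2 * alpha \<omega> (mn + q))"

primrec mseq :: "real^'d \<Rightarrow> nat \<Rightarrow> nat" where
  "mseq \<omega> 0 = 0"
| "mseq \<omega> (Suc n) = mseq \<omega> n + pnum \<omega> (mseq \<omega> n) + 1"

definition cutoff :: "(real \<Rightarrow> real) \<Rightarrow> bool" where
  "cutoff chi \<longleftrightarrow> (\<forall>k x. ((deriv ^^ k) chi) differentiable (at x))
     \<and> (\<forall>x. chi (- x) = chi x)
     \<and> (\<forall>x y. \<bar>x\<bar> \<le> \<bar>y\<bar> \<longrightarrow> chi y \<le> chi x)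
     \<and> (\<forall>x. \<bar>x\<bar> \<le> 1/2 \<longrightarrow> chi x = 1)
     \<and> (\<forall>x. \<bar>x\<bar> \<ge> 1 \<longrightarrow> chi x = 0)"

definition chiN :: "(real \<Rightarrow> real) \<Rightarrow> real^'d \<Rightarrow> nat \<Rightarrow> real \<Rightarrow> real" where
  "chiN chi \<omega> n x = chi (4 * x / alpha \<omega> (mseq \<omega> n))"

definition PsiN :: "(real \<Rightarrow> real) \<Rightarrow> real^'d \<Rightarrow> nat \<Rightarrow> real \<Rightarrow> real" where
  "PsiN chi \<omega> n x = (if n = 0 then 1 else chiN chi \<omega> (n - 1) x) * (1 - chiN chi \<omega> n x)"

text \<open>A tree: finite set V of nodes; par v = Some u means the line l_v leaving v
  enters node u; par v = None means l_v is the root line (enters the root).\<close>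

definition up :: "('v \<Rightarrow> 'v option) \<Rightarrow> nat \<Rightarrow> 'v \<Rightarrow> 'v option" where
  "up par k w = ((\<lambda>x. Option.bind x par) ^^ k) (Some w)"

definition is_tree :: "'v set \<Rightarrow> ('v \<Rightarrow> 'v option) \<Rightarrow> bool" where
  "is_tree V par \<longleftrightarrow> finite V
     \<and> (\<exists>!r. r \<in> V \<and> par r = None)
     \<and> (\<forall>v\<in>V. \<forall>u. par v = Some u \<longrightarrow> u \<in> V)
     \<and> (\<forall>v\<in>V. \<exists>k. up par k v = None)"

definition preceq :: "'v set \<Rightarrow> ('v \<Rightarrow> 'v option) \<Rightarrow> 'v \<Rightarrow> 'v \<Rightarrow> bool" where
  "preceq V par w v \<longleftrightarrow> w \<in> V \<and> (\<exists>k. up par k w = Some v)"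

definition mom :: "'v set \<Rightarrow> ('v \<Rightarrow> 'v option) \<Rightarrow> ('v \<Rightarrow> int^'d) \<Rightarrow> 'v \<Rightarrow> int^'d" where
  "mom V par \<nu> v = (\<Sum>w\<in>{w. preceq V par w v}. \<nu> w)"

definition labelled_tree ::
  "'v set \<Rightarrow> ('v \<Rightarrow> 'v option) \<Rightarrow> ('v \<Rightarrow> int^'d) \<Rightarrow> ('v \<Rightarrow> int) \<Rightarrow> bool" where
  "labelled_tree V par \<nu> sc \<longleftrightarrow> is_tree V par
     \<and> (\<forall>v\<in>V. par v \<noteq> None \<longrightarrow> mom V par \<nu> v \<noteq> 0)
     \<and> (\<forall>v\<in>V. (mom V par \<nu> v = 0 \<longrightarrow> sc v = -1) \<and> (mom V par \<nu> v \<noteq> 0 \<longrightarrow> sc v \<ge> 0))"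

section \<open>Subgraphs and clusters (a subgraph is given by its node set S)\<close>

text \<open>lines joining two nodes of S (identified with the node they leave)\<close>
definition lines_in :: "('v \<Rightarrow> 'v option) \<Rightarrow> 'v set \<Rightarrow> 'v set" where
  "lines_in par S = {v \<in> S. \<exists>u\<in>S. par v = Some u}"

definition adj :: "('v \<Rightarrow> 'v option) \<Rightarrow> 'v set \<Rightarrow> 'v \<Rightarrow> 'v \<Rightarrow> bool" where
  "adj par S a b \<longleftrightarrow> a \<in> S \<and> b \<in> S \<and> (par a = Some b \<or> par b = Some a)"

definition connected_sub :: "('v \<Rightarrow> 'v option) \<Rightarrow> 'v set \<Rightarrow> bool" where
  "connected_sub par S \<longleftrightarrow> S \<noteq> {} \<and> (\<forall>a\<in>S. \<forall>b\<in>S. (adj par S)\<^sup>*\<^sup>* a b)"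

definition scale_le_sub :: "'v set \<Rightarrow> ('v \<Rightarrow> 'v option) \<Rightarrow> ('v \<Rightarrow> int) \<Rightarrow> int \<Rightarrow> 'v set \<Rightarrow> bool" where
  "scale_le_sub V par sc n S \<longleftrightarrow> S \<subseteq> V \<and> connected_sub par S
     \<and> (\<forall>v\<in>lines_in par S. sc v \<le> n)"

definition cluster :: "'v set \<Rightarrow> ('v \<Rightarrow> 'v option) \<Rightarrow> ('v \<Rightarrow> int) \<Rightarrow> int \<Rightarrow> 'v set \<Rightarrow> bool" where
  "cluster V par sc n S \<longleftrightarrow> scale_le_sub V par sc n S
     \<and> (\<forall>S'. scale_le_sub V par sc n S' \<and> S \<subseteq> S' \<longrightarrow> S' = S)
     \<and> (\<exists>v\<in>lines_in par S. sc v = n)"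

definition entering :: "'v set \<Rightarrow> ('v \<Rightarrow> 'v option) \<Rightarrow> 'v set \<Rightarrow> 'v set" where
  "entering V par S = {v \<in> V - S. \<exists>u\<in>S. par v = Some u}"

definition exiting :: "('v \<Rightarrow> 'v option) \<Rightarrow> 'v set \<Rightarrow> 'v set" where
  "exiting par S = {v \<in> S. \<not> (\<exists>u\<in>S. par v = Some u)}"

definition self_energy_on :: "'v set \<Rightarrow> ('v \<Rightarrow> 'v option) \<Rightarrow> ('v \<Rightarrow> int^'d) \<Rightarrow> ('v \<Rightarrow> int)
    \<Rightarrow> int \<Rightarrow> 'v set \<Rightarrow> bool" where
  "self_energy_on V par \<nu> sc n S \<longleftrightarrow> cluster V par sc n S
     \<and> (\<exists>l l'. entering V par S = {l'} \<and> exiting par S = {l}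
               \<and> mom V par \<nu> l = mom V par \<nu> l')"

definition self_energy :: "'v set \<Rightarrow> ('v \<Rightarrow> 'v option) \<Rightarrow> ('v \<Rightarrow> int^'d) \<Rightarrow> ('v \<Rightarrow> int)
    \<Rightarrow> 'v set \<Rightarrow> bool" where
  "self_energy V par \<nu> sc S \<longleftrightarrow> (\<exists>n. self_energy_on V par \<nu> sc n S)
     \<or> (\<exists>v\<in>V. S = {v} \<and> \<nu> v = 0 \<and> card (entering V par S) = 1)"

definition renormalised :: "'v set \<Rightarrow> ('v \<Rightarrow> 'v option) \<Rightarrow> ('v \<Rightarrow> int^'d) \<Rightarrow> ('v \<Rightarrow> int)
    \<Rightarrow> 'v set \<Rightarrow> bool" where
  "renormalised V par \<nu> sc T \<longleftrightarrow> (\<forall>S. S \<subset> T \<longrightarrow> \<not> self_energy V par \<nu> sc S)"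

definition Np :: "('v \<Rightarrow> 'v option) \<Rightarrow> ('v \<Rightarrow> int) \<Rightarrow> int \<Rightarrow> 'v set \<Rightarrow> nat" where
  "Np par sc p T = card {v \<in> lines_in par T. sc v \<ge> p}"

definition Kf :: "('v \<Rightarrow> int^'d) \<Rightarrow> 'v set \<Rightarrow> int" where
  "Kf \<nu> T = (\<Sum>v\<in>T. norm1 (\<nu> v))"

end

theory Submission
  imports Defs
begin


lemma up_0[simp]: "up par 0 w = Some w" by (simp add: up_def)
lemma up_Suc: "up par (Suc k) w = Option.bind (up par k w) par" by (simp add: up_def)
lemma up_Suc': "up par (Suc k) w = (case par w of None \<Rightarrow> None | Some u \<Rightarrow> up par k u)"
proof (induction k arbitrary: w)
  case 0 then show ?case by (simp add: up_def split: option.splits)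
next
  case (Suc k) then show ?case by (simp add: up_Suc split: option.splits)
qed
lemma up_add: "up par (a + b) w = Option.bind (up par a w) (up par b)"
proof (induction b)
  case 0 then show ?case by (cases "up par a w") auto
next
  case (Suc b) then show ?case by (cases "up par a w") (auto simp: up_Suc)
qed
lemma up_None_mono: "up par k w = None \<Longrightarrow> k \<le> k' \<Longrightarrow> up par k' w = None"
  using up_add[of par k "k'-k" w] by simp

lemma up_in_V: assumes "is_tree V par" "w \<in> V" "up par k w = Some z" shows "z \<in> V"
  using assms(2,3)
proof (induction k arbitrary: z)
  case 0 then show ?case by simp
next
  case (Suc k)
  then obtain y where y: "up par k w = Some y" by (cases "up par k w") (auto simp: up_Suc)
  then have "par y = Some z" using Suc by (simp add: up_Suc)
  with Suc y assms(1) show ?case unfolding is_tree_def by blast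
qed

lemma up_period: assumes "up par d z = Some z" shows "up par (j*d) z = Some z"
proof (induction j)
  case 0 then show ?case by simp
next
  case (Suc j) then show ?case using up_add[of par d "j*d" z] assms by (simp add: add.commute)
qed

lemma up_inj: assumes "is_tree V par" "w \<in> V" "up par a w = Some z" "up par b w = Some z"
  shows "a = b"
proof (rule ccontr)
  assume ne: "a \<noteq> b"
  { fix a b assume ab: "a < b" "up par a w = Some z" "up par b w = Some z"
    obtain K where K: "up par K w = None" using assms(1,2) unfolding is_tree_def by blast
    define d where "d = b - a"
    have "up par d z = Some z" using up_add[of par a d w] ab by (simp add: d_def)
    then have "up par (K*d) z = Some z" by (rule up_period)
    then have "up par (a + K*d) w = Some z" using up_add[of par a "K*d" w] ab by simp
    moreover have "K \<le> a + K*d"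
    proof -
      have "1 \<le> d" using ab by (simp add: d_def)
      then have "K*1 \<le> K*d" by (rule mult_le_mono2)
      then show ?thesis by (metis mult.right_neutral trans_le_add2)
    qed
    ultimately have False using up_None_mono[OF K] by force }
  then show False using ne assms(3,4) by (metis linorder_neq_iff)
qed

lemma up_chain: assumes "up par a w = Some x" "up par b w = Some y" "a \<le> b"
  shows "up par (b - a) x = Some y"
  using up_add[of par a "b-a" w] assms by simp

lemma adj_sym: "adj par S a b = adj par S b a" unfolding adj_def by blast

lemma rtranclp_sym: assumes "\<And>a b. r a b = r b a" "r\<^sup>*\<^sup>* a b" shows "r\<^sup>*\<^sup>* b a"
  using assms(2)
proof (induction rule: rtranclp_induct)
  case base then show ?case by simp
next
  case (step y z) then show ?case using assms(1) by (metis converse_rtranclp_into_rtranclp)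
qed




locale brj =
  fixes V :: "'v set" and par :: "'v \<Rightarrow> 'v option" and \<nu> :: "'v \<Rightarrow> int^'d"
    and sc :: "'v \<Rightarrow> int" and T :: "'v set" and p :: int and e :: 'v and E :: real
  assumes tree: "is_tree V par"
    and lab: "labelled_tree V par \<nu> sc"
    and TV: "T \<subseteq> V"
    and ent: "entering V par T = {e}"
    and sce: "sc e \<ge> p"
    and ren: "renormalised V par \<nu> sc T"
    and bnd1: "\<And>v. v \<in> V \<Longrightarrow> par v \<noteq> None \<Longrightarrow> sc v \<ge> p \<Longrightarrow> E \<le> real_of_int (norm1 (mom V par \<nu> v))"
    and bnd2: "\<And>v x. v \<in> V \<Longrightarrow> x \<in> V \<Longrightarrow> par v \<noteq> None \<Longrightarrow> par x \<noteq> None \<Longrightarrow> sc v \<ge> p \<Longrightarrow> sc x \<ge> p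
       \<Longrightarrow> mom V par \<nu> v \<noteq> mom V par \<nu> x \<Longrightarrow> E \<le> real_of_int (norm1 (mom V par \<nu> v - mom V par \<nu> x))"
begin

definition "Lp = {v \<in> lines_in par T. sc v \<ge> p}"
definition "M = insert e Lp"
definition "D L = {w \<in> T. \<exists>a. up par a w = Some L \<and> (\<forall>j<a. up par j w \<notin> Some ` M)}"
definition "ch L = {x \<in> M. \<exists>u \<in> D L. par x = Some u}"

lemma finV: "finite V" using tree unfolding is_tree_def by blast
lemma e_facts: "e \<in> V" "e \<notin> T" "\<exists>u\<in>T. par e = Some u"
  using ent unfolding entering_def by auto
lemma Lp_T: "Lp \<subseteq> T" unfolding Lp_def lines_in_def by auto
lemma M_V: "M \<subseteq> V" using Lp_T TV e_facts unfolding M_def by auto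
lemma M_par: "x \<in> M \<Longrightarrow> \<exists>u\<in>T. par x = Some u"
  using e_facts unfolding M_def Lp_def lines_in_def by auto
lemma M_sc: "x \<in> M \<Longrightarrow> sc x \<ge> p"
  using sce unfolding M_def Lp_def by auto
lemma e_notin_Lp: "e \<notin> Lp" using Lp_T e_facts by auto
lemma finT: "finite T" using finV TV finite_subset by blast
lemma finLp: "finite Lp" using finT Lp_T finite_subset by blast
lemma finM: "finite M" using finLp unfolding M_def by simp
lemma cardM: "card M = card Lp + 1" using finLp e_notin_Lp unfolding M_def by simp

lemma enter: "z \<in> V \<Longrightarrow> z \<notin> T \<Longrightarrow> up par c z = Some y \<Longrightarrow> y \<in> T \<Longrightarrow> \<exists>j<c. up par j z = Some e"
proof (induction c arbitrary: z)
  case 0 then show ?case by simp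
next
  case (Suc c)
  then obtain z' where z': "par z = Some z'" "up par c z' = Some y"
    by (auto simp: up_Suc' split: option.splits)
  have z'V: "z' \<in> V" using tree Suc.prems(1) z'(1) unfolding is_tree_def by blast
  show ?case
  proof (cases "z' \<in> T")
    case True
    then have "z \<in> entering V par T" using Suc.prems z' unfolding entering_def by auto
    then show ?thesis using ent by auto
  next
    case False
    from Suc.IH[OF z'V False z'(2) Suc.prems(4)] obtain j where "j < c" "up par j z' = Some e" by blast
    then show ?thesis using z'(1) by (intro exI[of _ "Suc j"]) (auto simp: up_Suc')
  qed
qed

lemma D_T: "D L \<subseteq> T" unfolding D_def by auto

lemma D_self: "L \<in> Lp \<Longrightarrow> L \<in> D L"
  using Lp_T unfolding D_def by (auto intro!: exI[of _ 0])

lemma D_marked: assumes "x \<in> M" "x \<in> D L" shows "x = L"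
proof -
  obtain a where a: "up par a x = Some L" "\<forall>j<a. up par j x \<notin> Some ` M" using assms(2) unfolding D_def by blast
  have "a = 0" using a(2) assms(1) by (cases a) auto
  then show ?thesis using a(1) by simp
qed

lemma D_idx: assumes "w \<in> D L" "up par a w = Some L" shows "\<forall>j<a. up par j w \<notin> Some ` M"
proof -
  obtain a' where a': "up par a' w = Some L" "\<forall>j<a'. up par j w \<notin> Some ` M" using assms(1) unfolding D_def by blast
  have "a = a'" using up_inj[OF tree _ assms(2) a'(1)] assms(1) D_T TV by blast
  then show ?thesis using a' by simp
qed

lemma D_up: assumes "L \<in> Lp" "w \<in> D L" "w \<noteq> L"
  shows "\<exists>u. par w = Some u \<and> u \<in> D L \<and> (\<exists>k. up par (Suc k) w = Some L \<and> up par k u = Some L)"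
proof -
  obtain a where a: "up par a w = Some L" "\<forall>j<a. up par j w \<notin> Some ` M" using assms(2) unfolding D_def by blast
  obtain k where k: "a = Suc k" using a(1) assms(3) by (cases a) auto
  obtain u where u: "par w = Some u" "up par k u = Some L" using a(1) k by (auto simp: up_Suc' split: option.splits)
  have wV: "w \<in> V" using assms(2) D_T TV by blast
  have uV: "u \<in> V" using tree wV u(1) unfolding is_tree_def by blast
  have uT: "u \<in> T"
  proof (rule ccontr)
    assume "u \<notin> T"
    from enter[OF uV this u(2)] assms(1) Lp_T obtain j where "j < k" "up par j u = Some e" by blast
    then have "up par (Suc j) w = Some e" "Suc j < a" using u(1) k by (auto simp: up_Suc')
    then show False using a(2) unfolding M_def by blast
  qed
  have "\<forall>j<k. up par j u \<notin> Some ` M"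
  proof (intro allI impI)
    fix j assume "j < k"
    then show "up par j u \<notin> Some ` M" using a(2)[rule_format, of "Suc j"] u(1) k by (simp add: up_Suc')
  qed
  then have "u \<in> D L" using uT u(2) unfolding D_def by blast
  then show ?thesis using u k a(1) by blast
qed

lemma par_l_notin_D: assumes "L \<in> Lp" "par L = Some u" shows "u \<notin> D L"
proof
  assume "u \<in> D L"
  then obtain b where "up par b u = Some L" unfolding D_def by blast
  then have "up par (Suc b) L = Some L" using assms(2) by (simp add: up_Suc')
  moreover have "L \<in> V" using assms(1) Lp_T TV by blast
  ultimately have "Suc b = 0" using up_inj[OF tree, of L "Suc b" L 0] by simp
  then show False by simp
qed

lemma Lp_par: "L \<in> Lp \<Longrightarrow> \<exists>u\<in>T. par L = Some u" unfolding Lp_def lines_in_def by auto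

lemma ch_M: "ch L \<subseteq> M" unfolding ch_def by auto

lemma ch_above: assumes "x \<in> ch L" shows "\<exists>c. up par (Suc c) x = Some L"
proof -
  obtain u where u: "u \<in> D L" "par x = Some u" using assms unfolding ch_def by blast
  then obtain c where "up par c u = Some L" unfolding D_def by blast
  then show ?thesis using u by (auto simp: up_Suc')
qed

lemma ch_notin_D: assumes "L \<in> Lp" "x \<in> ch L" shows "x \<notin> D L"
proof
  assume xD: "x \<in> D L"
  then have "x = L" using D_marked assms ch_M by blast
  moreover obtain u where "u \<in> D L" "par x = Some u" using assms unfolding ch_def by blast
  ultimately show False using par_l_notin_D assms(1) by blast
qed

end

context brj begin

lemma pre_V: "{w. preceq V par w x} \<subseteq> V" unfolding preceq_def by auto

lemma ch_sub: assumes "x \<in> ch L" "preceq V par w x" shows "preceq V par w L"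
proof -
  obtain c where c: "up par (Suc c) x = Some L" using ch_above assms(1) by blast
  obtain b where b: "up par b w = Some x" "w \<in> V" using assms(2) unfolding preceq_def by blast
  have "up par (b + Suc c) w = Some L" using up_add[of par b "Suc c" w] b c by simp
  then show ?thesis using b unfolding preceq_def by blast
qed

lemma ch_disj_D: assumes "L \<in> Lp" "x \<in> ch L" "preceq V par w x" shows "w \<notin> D L"
proof
  assume wD: "w \<in> D L"
  obtain c where c: "up par (Suc c) x = Some L" using ch_above assms(2) by blast
  obtain b where b: "up par b w = Some x" "w \<in> V" using assms(3) unfolding preceq_def by blast
  have "up par (b + Suc c) w = Some L" using up_add[of par b "Suc c" w] b c by simp
  from D_idx[OF wD this] have "up par b w \<notin> Some ` M" by simp
  then show False using b ch_M assms(2) by auto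
qed

lemma ch_disj: assumes "L \<in> Lp" "x \<in> ch L" "x' \<in> ch L" "x \<noteq> x'" "preceq V par w x" "preceq V par w x'"
  shows False
proof -
  { fix x x' b b' assume x: "x \<in> ch L" "x' \<in> ch L" and bb: "b < b'" "up par b w = Some x" "up par b' w = Some x'"
      and wV: "w \<in> V"
    obtain u where u: "u \<in> D L" "par x = Some u" using x unfolding ch_def by blast
    have ub: "up par (Suc b) w = Some u" using bb u by (simp add: up_Suc)
    obtain au where au: "up par au u = Some L" using u unfolding D_def by blast
    obtain c' where c': "up par (Suc c') x' = Some L" using ch_above x by blast
    have e1: "up par (Suc b + au) w = Some L" using up_add[of par "Suc b" au w] ub au by simp
    have e2: "up par (b' + Suc c') w = Some L" using up_add[of par b' "Suc c'" w] bb c' by simp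
    have "Suc b + au = b' + Suc c'" using up_inj[OF tree wV e1 e2] .
    then have lt: "b' - Suc b < au" using bb by simp
    have "up par (b' - Suc b) u = Some x'" using up_chain[OF ub bb(3)] bb by simp
    with D_idx[OF u(1) au] lt x ch_M have False by blast }
  note * = this
  obtain b where b: "up par b w = Some x" "w \<in> V" using assms(5) unfolding preceq_def by blast
  obtain b' where b': "up par b' w = Some x'" using assms(6) unfolding preceq_def by blast
  have "b \<noteq> b'" using b b' assms(4) by auto
  then show False using *[OF assms(2,3) _ b(1) b' b(2)] *[OF assms(3,2) _ b' b(1) b(2)] by linarith
qed

lemma cover: assumes "L \<in> Lp" "preceq V par w L" "w \<notin> D L"
  shows "\<exists>x\<in>ch L. preceq V par w x"
proof -
  obtain a where a: "up par a w = Some L" and wV: "w \<in> V" using assms(2) unfolding preceq_def by blast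
  have ex: "\<exists>j<a. up par j w \<in> Some ` M"
  proof (cases "w \<in> T")
    case True then show ?thesis using assms(3) a unfolding D_def by blast
  next
    case False
    from enter[OF wV False a] assms(1) Lp_T obtain j where "j < a" "up par j w = Some e" by blast
    then show ?thesis unfolding M_def by blast
  qed
  define J where "J = (GREATEST j. j < a \<and> up par j w \<in> Some ` M)"
  have J: "J < a \<and> up par J w \<in> Some ` M" unfolding J_def
    using ex by (rule GreatestI_ex_nat[where b=a]) auto
  have Jmax: "\<And>j. j < a \<Longrightarrow> up par j w \<in> Some ` M \<Longrightarrow> j \<le> J" unfolding J_def
    by (rule Greatest_le_nat[where b=a]) auto
  obtain x where x: "up par J w = Some x" "x \<in> M" using J by blast
  obtain u where u: "u \<in> T" "par x = Some u" using M_par x(2) by blast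
  have uJ: "up par (Suc J) w = Some u" using x u by (simp add: up_Suc)
  have ua: "up par (a - Suc J) u = Some L" using up_chain[OF uJ a] J by simp
  have "\<forall>i<a - Suc J. up par i u \<notin> Some ` M"
  proof (intro allI impI)
    fix i assume i: "i < a - Suc J"
    have "up par (Suc J + i) w = up par i u" using up_add[of par "Suc J" i w] uJ by simp
    moreover have "\<not> (Suc J + i \<le> J)" by simp
    moreover have "Suc J + i < a" using i by simp
    ultimately show "up par i u \<notin> Some ` M" using Jmax[of "Suc J + i"] by auto
  qed
  then have "u \<in> D L" using u ua unfolding D_def by blast
  then have "x \<in> ch L" using x u unfolding ch_def by blast
  moreover have "preceq V par w x" using x wV unfolding preceq_def by blast
  ultimately show ?thesis by blast
qed

lemma decomp: assumes "L \<in> Lp"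
  shows "mom V par \<nu> L = sum \<nu> (D L) + (\<Sum>x\<in>ch L. mom V par \<nu> x)"
proof -
  have eq: "{w. preceq V par w L} = D L \<union> (\<Union>x\<in>ch L. {w. preceq V par w x})"
  proof (intro set_eqI iffI)
    fix w assume "w \<in> {w. preceq V par w L}"
    then show "w \<in> D L \<union> (\<Union>x\<in>ch L. {w. preceq V par w x})" using cover[OF assms] by blast
  next
    fix w assume w: "w \<in> D L \<union> (\<Union>x\<in>ch L. {w. preceq V par w x})"
    show "w \<in> {w. preceq V par w L}"
    proof (cases "w \<in> D L")
      case True then show ?thesis using D_T TV unfolding D_def preceq_def by blast
    next
      case False then show ?thesis using w ch_sub by blast
    qed
  qed
  have finch: "finite (ch L)" using finM ch_M finite_subset by blast
  have finD: "finite (D L)" using finT D_T finite_subset by blast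
  have finP: "\<And>x. finite {w. preceq V par w x}" using finV pre_V finite_subset by blast
  have d1: "D L \<inter> (\<Union>x\<in>ch L. {w. preceq V par w x}) = {}" using ch_disj_D[OF assms] by blast
  have "mom V par \<nu> L = sum \<nu> (D L) + sum \<nu> (\<Union>x\<in>ch L. {w. preceq V par w x})"
    unfolding mom_def eq using finD finch finP d1 by (subst sum.union_disjoint) auto
  also have "sum \<nu> (\<Union>x\<in>ch L. {w. preceq V par w x}) = (\<Sum>x\<in>ch L. sum \<nu> {w. preceq V par w x})"
    using finch finP ch_disj[OF assms] by (subst sum.UNION_disjoint) auto
  finally show ?thesis unfolding mom_def by simp
qed

lemma entering_D: assumes "L \<in> Lp" shows "entering V par (D L) = ch L"
proof (intro set_eqI iffI)
  fix x assume "x \<in> ch L"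
  then show "x \<in> entering V par (D L)" using ch_notin_D[OF assms] ch_M M_V unfolding ch_def entering_def by blast
next
  fix v assume v: "v \<in> entering V par (D L)"
  then obtain u where u: "u \<in> D L" "par v = Some u" "v \<in> V" "v \<notin> D L" unfolding entering_def by blast
  have "v \<in> M"
  proof (cases "v \<in> T")
    case False
    then have "v \<in> entering V par T" using u D_T unfolding entering_def by blast
    then show ?thesis using ent unfolding M_def by blast
  next
    case True
    obtain au where au: "up par au u = Some L" using u unfolding D_def by blast
    have "up par (Suc au) v = Some L" using au u by (simp add: up_Suc')
    with True u(4) obtain j where j: "j < Suc au" "up par j v \<in> Some ` M" unfolding D_def by blast
    show ?thesis
    proof (cases j)
      case 0 then show ?thesis using j by auto
    next
      case (Suc j')
      then have "up par j' u \<in> Some ` M" "j' < au" using j u by (auto simp: up_Suc')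
      then show ?thesis using D_idx[OF u(1) au] by blast
    qed
  qed
  then show "v \<in> ch L" using u unfolding ch_def by blast
qed

lemma exiting_D: assumes "L \<in> Lp" shows "exiting par (D L) = {L}"
  using D_up[OF assms] par_l_notin_D[OF assms] D_self[OF assms] unfolding exiting_def by blast

lemma D_lines_sc: assumes "L \<in> Lp" "v \<in> lines_in par (D L)" shows "sc v < p"
proof (rule ccontr)
  assume "\<not> sc v < p"
  then have "v \<in> Lp" using assms(2) D_T unfolding Lp_def lines_in_def by auto
  then have "v = L" using D_marked assms(2) unfolding M_def lines_in_def by blast
  then show False using assms par_l_notin_D unfolding lines_in_def by blast
qed

lemma D_psub: assumes "L \<in> Lp" shows "D L \<subset> T"
  using D_T Lp_par[OF assms] par_l_notin_D[OF assms] by blast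

lemma D_conn_L: assumes "L \<in> Lp" shows "\<And>w. w \<in> D L \<Longrightarrow> up par k w = Some L \<Longrightarrow> (adj par (D L))\<^sup>*\<^sup>* w L"
proof (induction k)
  case 0 then show ?case by simp
next
  case (Suc k)
  show ?case
  proof (cases "w = L")
    case True then show ?thesis by simp
  next
    case False
    from D_up[OF assms Suc.prems(1) False] obtain u where u: "par w = Some u" "u \<in> D L" by blast
    have "up par k u = Some L" using Suc.prems(2) u by (simp add: up_Suc')
    then have "(adj par (D L))\<^sup>*\<^sup>* u L" using Suc.IH u(2) by blast
    moreover have "adj par (D L) w u" using u Suc.prems(1) unfolding adj_def by blast
    ultimately show ?thesis by (metis converse_rtranclp_into_rtranclp)
  qed
qed

end


lemma norm1_nonneg: "norm1 v \<ge> 0" unfolding norm1_def by (simp add: sum_nonneg)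

lemma norm1_sum: "norm1 (sum f S) \<le> (\<Sum>w\<in>S. norm1 (f w))"
proof -
  have "norm1 (sum f S) = (\<Sum>i\<in>UNIV. \<bar>\<Sum>w\<in>S. f w $ i\<bar>)" unfolding norm1_def by simp
  also have "\<dots> \<le> (\<Sum>i\<in>UNIV. \<Sum>w\<in>S. \<bar>f w $ i\<bar>)" by (intro sum_mono sum_abs)
  also have "\<dots> = (\<Sum>w\<in>S. norm1 (f w))" unfolding norm1_def by (rule sum.swap)
  finally show ?thesis .
qed

lemma crossing: assumes "r\<^sup>*\<^sup>* a b" "a \<in> A" "b \<notin> A" shows "\<exists>x y. r x y \<and> x \<in> A \<and> y \<notin> A"
  using assms
proof (induction rule: rtranclp_induct)
  case base then show ?case by simp
next
  case (step y z) then show ?case by (cases "y \<in> A") auto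
qed

context brj begin

lemma D_connected: assumes "L \<in> Lp" shows "connected_sub par (D L)"
proof -
  have c: "(adj par (D L))\<^sup>*\<^sup>* w L" if wD: "w \<in> D L" for w
  proof -
    obtain k where "up par k w = Some L" using wD unfolding D_def by blast
    then show ?thesis using D_conn_L[OF assms wD] by blast
  qed
  show ?thesis unfolding connected_sub_def
  proof (intro conjI ballI)
    show "D L \<noteq> {}" using D_self[OF assms] by blast
  next
    fix a b assume "a \<in> D L" "b \<in> D L"
    then show "(adj par (D L))\<^sup>*\<^sup>* a b"
      using c rtranclp_sym[of "adj par (D L)", OF adj_sym] by (meson rtranclp_trans)
  qed
qed

lemma D_maximal: assumes "L \<in> Lp" "q < p" "scale_le_sub V par sc q S'" "D L \<subseteq> S'" shows "S' = D L"
proof (rule ccontr)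
  assume "S' \<noteq> D L"
  then obtain z where z: "z \<in> S'" "z \<notin> D L" using assms(4) by blast
  have "(adj par S')\<^sup>*\<^sup>* L z" using assms(3,4) D_self[OF assms(1)] z(1)
    unfolding scale_le_sub_def connected_sub_def by blast
  from crossing[OF this D_self[OF assms(1)] z(2)] obtain x y where
    xy: "adj par S' x y" "x \<in> D L" "y \<notin> D L" by blast
  have lines: "\<And>v. v \<in> lines_in par S' \<Longrightarrow> sc v \<le> q" using assms(3) unfolding scale_le_sub_def by blast
  have S'V: "S' \<subseteq> V" using assms(3) unfolding scale_le_sub_def by blast
  show False
  proof (cases "par x = Some y")
    case True
    then have "x \<in> exiting par (D L)" using xy unfolding exiting_def by auto
    then have "x = L" using exiting_D[OF assms(1)] by blast
    then have "L \<in> lines_in par S'" using True xy(1) unfolding adj_def lines_in_def by blast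
    then have "sc L \<le> q" by (rule lines)
    moreover have "sc L \<ge> p" using assms(1) unfolding Lp_def by blast
    ultimately show False using assms(2) by simp
  next
    case False
    then have py: "par y = Some x" using xy(1) unfolding adj_def by blast
    then have "y \<in> entering V par (D L)" using xy S'V unfolding entering_def adj_def by blast
    then have "y \<in> M" using entering_D[OF assms(1)] ch_M by blast
    then have "sc y \<ge> p" by (rule M_sc)
    moreover have "y \<in> lines_in par S'" using py xy(1) unfolding adj_def lines_in_def by blast
    ultimately show False using lines assms(2) by fastforce
  qed
qed

lemma not_self_energy: assumes "L \<in> Lp" "ch L = {x}" "mom V par \<nu> L = mom V par \<nu> x" shows False
proof -
  have dec: "mom V par \<nu> L = sum \<nu> (D L) + mom V par \<nu> x" using decomp[OF assms(1)] assms(2) by simp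
  have "self_energy V par \<nu> sc (D L)"
  proof (cases "lines_in par (D L) = {}")
    case True
    have "D L = {L}"
    proof (intro set_eqI iffI)
      fix w assume w: "w \<in> D L"
      show "w \<in> {L}"
      proof (rule ccontr)
        assume "w \<notin> {L}"
        then obtain u where "par w = Some u" "u \<in> D L" using D_up[OF assms(1) w] by blast
        then have "w \<in> lines_in par (D L)" using w unfolding lines_in_def by blast
        then show False using True by blast
      qed
    qed (use D_self[OF assms(1)] in blast)
    moreover have "\<nu> L = 0" using dec assms(3) \<open>D L = {L}\<close> by simp
    moreover have "card (entering V par (D L)) = 1" using entering_D[OF assms(1)] assms(2) by simp
    moreover have "L \<in> V" using assms(1) Lp_T TV by blast
    ultimately show ?thesis unfolding self_energy_def by blast
  next
    case False
    define q where "q = Max (sc ` lines_in par (D L))"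
    have finli: "finite (lines_in par (D L))"
      using finT D_T finite_subset unfolding lines_in_def by (metis (no_types, lifting) mem_Collect_eq subsetI)
    have qin: "q \<in> sc ` lines_in par (D L)" unfolding q_def using finli False by (intro Max_in) auto
    have qge: "\<And>v. v \<in> lines_in par (D L) \<Longrightarrow> sc v \<le> q" unfolding q_def using finli by simp
    have qp: "q < p" using qin D_lines_sc[OF assms(1)] by blast
    have sls: "scale_le_sub V par sc q (D L)" unfolding scale_le_sub_def
      using D_T TV D_connected[OF assms(1)] qge by blast
    have "cluster V par sc q (D L)" unfolding cluster_def
      using sls D_maximal[OF assms(1) qp] qin by blast
    moreover have "entering V par (D L) = {x}" using entering_D[OF assms(1)] assms(2) by simp
    moreover have "exiting par (D L) = {L}" using exiting_D[OF assms(1)] .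
    ultimately have "self_energy_on V par \<nu> sc q (D L)" unfolding self_energy_on_def using assms(3) by blast
    then show ?thesis unfolding self_energy_def by blast
  qed
  then show False using ren D_psub[OF assms(1)] unfolding renormalised_def by blast
qed

lemma Kf_D: assumes "L \<in> Lp" "card (ch L) \<le> 1" shows "E \<le> real_of_int (Kf \<nu> (D L))"
proof -
  have finch: "finite (ch L)" using finM ch_M finite_subset by blast
  have LV: "L \<in> V" "par L \<noteq> None" "sc L \<ge> p" using assms(1) Lp_T TV Lp_par[OF assms(1)] unfolding Lp_def by auto
  have tri: "norm1 (sum \<nu> (D L)) \<le> Kf \<nu> (D L)" unfolding Kf_def by (rule norm1_sum)
  show ?thesis
  proof (cases "ch L = {}")
    case True
    then have "mom V par \<nu> L = sum \<nu> (D L)" using decomp[OF assms(1)] by simp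
    then show ?thesis using bnd1[OF LV] tri by (metis of_int_le_iff order_trans)
  next
    case False
    then obtain x where x: "ch L = {x}" using assms(2) finch
      by (metis card_0_eq card_1_singletonE le_neq_implies_less less_one)
    have xM: "x \<in> M" using x ch_M by blast
    have xV: "x \<in> V" "par x \<noteq> None" "sc x \<ge> p" using xM M_V M_par[OF xM] M_sc[OF xM] by auto
    have ne: "mom V par \<nu> L \<noteq> mom V par \<nu> x" using not_self_energy[OF assms(1) x] by blast
    have "mom V par \<nu> L - mom V par \<nu> x = sum \<nu> (D L)" using decomp[OF assms(1)] x by simp
    then show ?thesis using bnd2[OF LV(1) xV(1) LV(2) xV(2) LV(3) xV(3) ne] tri by simp
  qed
qed

lemma D_disj: assumes "L \<in> Lp" "L' \<in> Lp" "L \<noteq> L'" "w \<in> D L" "w \<in> D L'" shows False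
proof -
  { fix L L' a a' assume h: "L \<in> Lp" "L' \<in> Lp" "a < a'" "up par a w = Some L" "up par a' w = Some L'" "w \<in> D L'"
    have "L \<in> M" using h unfolding M_def by blast
    then have False using D_idx[OF h(6) h(5)] h by blast }
  note * = this
  obtain a where a: "up par a w = Some L" using assms(4) unfolding D_def by blast
  obtain a' where a': "up par a' w = Some L'" using assms(5) unfolding D_def by blast
  have "a \<noteq> a'" using a a' assms(3) by auto
  then show False using *[OF assms(1,2) _ a a' assms(5)] *[OF assms(2,1) _ a' a assms(4)] by linarith
qed

lemma ch_disj2: assumes "L \<in> Lp" "L' \<in> Lp" "L \<noteq> L'" shows "ch L \<inter> ch L' = {}"
  using D_disj[OF assms] unfolding ch_def by auto

lemma top_exists: assumes "Lp \<noteq> {}" shows "\<exists>x\<in>M. \<forall>L\<in>Lp. x \<notin> ch L"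
proof (rule ccontr)
  assume H: "\<not> ?thesis"
  define h where "h x = card {w. preceq V par w x}" for x
  have finP: "\<And>x. finite {w. preceq V par w x}" using finV pre_V finite_subset by blast
  have Mne: "M \<noteq> {}" unfolding M_def by blast
  have "Max (h ` M) \<in> h ` M" using finM Mne by simp
  then obtain x where x: "x \<in> M" "h x = Max (h ` M)" by (metis imageE)
  obtain L where L: "L \<in> Lp" "x \<in> ch L" using H x(1) by blast
  have sub: "{w. preceq V par w x} \<subseteq> {w. preceq V par w L}" using ch_sub[OF L(2)] by blast
  have LV: "L \<in> V" using L(1) Lp_T TV by blast
  have "L \<in> {w. preceq V par w L}" using LV unfolding preceq_def by (auto intro: exI[of _ 0])
  moreover have "L \<notin> {w. preceq V par w x}"
  proof
    assume "L \<in> {w. preceq V par w x}"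
    then obtain b where b: "up par b L = Some x" unfolding preceq_def by blast
    obtain c where c: "up par (Suc c) x = Some L" using ch_above[OF L(2)] by blast
    have "up par (b + Suc c) L = Some L" using up_add[of par b "Suc c" L] b c by simp
    then have "b + Suc c = 0" using up_inj[OF tree LV, of "b + Suc c" L 0] by simp
    then show False by simp
  qed
  ultimately have "h x < h L" unfolding h_def using sub finP by (intro psubset_card_mono) auto
  moreover have "h L \<le> Max (h ` M)" using finM L(1) unfolding M_def by (intro Max_ge) auto
  ultimately show False using x(2) by simp
qed

lemma count: "card Lp \<le> 2 * card {L \<in> Lp. card (ch L) \<le> 1}"
proof (cases "Lp = {}")
  case True then show ?thesis by simp
next
  case False
  have finch: "\<And>L. finite (ch L)" using finM ch_M finite_subset by blast
  have "(\<Sum>L\<in>Lp. card (ch L)) = card (\<Union>L\<in>Lp. ch L)"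
    using finLp finch ch_disj2 by (subst card_UN_disjoint) auto
  also have "\<dots> < card M"
  proof (rule psubset_card_mono[OF finM])
    show "(\<Union>L\<in>Lp. ch L) \<subset> M" using top_exists[OF False] ch_M by blast
  qed
  finally have s: "(\<Sum>L\<in>Lp. card (ch L)) \<le> card Lp" using cardM by simp
  define C where "C = {L \<in> Lp. card (ch L) \<le> 1}"
  have "(\<Sum>L\<in>Lp. (2::nat)) \<le> (\<Sum>L\<in>Lp. card (ch L) + (if card (ch L) \<le> 1 then 2 else 0))"
    by (intro sum_mono) auto
  also have "\<dots> = (\<Sum>L\<in>Lp. card (ch L)) + (\<Sum>L\<in>Lp. (if card (ch L) \<le> 1 then 2 else 0))"
    by (rule sum.distrib)
  also have "(\<Sum>L\<in>Lp. (if card (ch L) \<le> 1 then 2 else 0)) = (\<Sum>L\<in>C. (2::nat))"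
    unfolding C_def using finLp by (subst sum.inter_filter) auto
  finally have "2 * card Lp \<le> card Lp + 2 * card C" using s by simp
  then show ?thesis unfolding C_def by simp
qed

lemma main_loc: assumes "E \<ge> 0" shows "real (card Lp) * E \<le> 2 * real_of_int (Kf \<nu> T)"
proof -
  define C where "C = {L \<in> Lp. card (ch L) \<le> 1}"
  have finC: "finite C" using finLp unfolding C_def by simp
  have finD: "\<And>L. finite (D L)" using finT D_T finite_subset by blast
  have "real (card C) * E = (\<Sum>L\<in>C. E)" by simp
  also have "\<dots> \<le> (\<Sum>L\<in>C. real_of_int (Kf \<nu> (D L)))"
    by (intro sum_mono Kf_D) (auto simp: C_def)
  also have "\<dots> = real_of_int (\<Sum>L\<in>C. \<Sum>v\<in>D L. norm1 (\<nu> v))" unfolding Kf_def by simp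
  also have "(\<Sum>L\<in>C. \<Sum>v\<in>D L. norm1 (\<nu> v)) = (\<Sum>v\<in>(\<Union>L\<in>C. D L). norm1 (\<nu> v))"
    using finC finD D_disj by (subst sum.UNION_disjoint) (auto simp: C_def)
  also have "\<dots> \<le> Kf \<nu> T" unfolding Kf_def
    by (intro sum_mono2 finT) (use D_T norm1_nonneg in auto)
  finally have k: "real (card C) * E \<le> real_of_int (Kf \<nu> T)" by simp
  have "real (card Lp) \<le> 2 * real (card C)" using count unfolding C_def by linarith
  then have "real (card Lp) * E \<le> 2 * real (card C) * E" using assms by (rule mult_right_mono)
  then show ?thesis using k by linarith
qed

lemma main_loc2: assumes "E \<ge> 0"
  shows "real (card {v \<in> lines_in par T. sc v \<ge> p}) * E \<le> 2 * real_of_int (Kf \<nu> T)"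
  using main_loc[OF assms] unfolding Lp_def .

end


lemma norm1_comp: "\<bar>v$i\<bar> \<le> norm1 v" unfolding norm1_def by (rule member_le_sum) auto

lemma norm1_pos: "v \<noteq> (0::int^'d) \<Longrightarrow> norm1 v \<ge> 1"
proof -
  assume "v \<noteq> 0"
  then obtain i where "v$i \<noteq> 0" using vec_eq_iff[of v 0] by auto
  then have "\<bar>v$i\<bar> \<ge> 1" by linarith
  then show ?thesis using norm1_comp[of v i] by linarith
qed

lemma fin_norm1: "finite {v::int^'d. norm1 v \<le> B}"
proof -
  have "{v::int^'d. norm1 v \<le> B} \<subseteq> vec_lambda ` (PiE UNIV (\<lambda>_. {-B..B}))"
  proof
    fix v :: "int^'d" assume "v \<in> {v. norm1 v \<le> B}"
    then have "\<And>i. \<bar>v$i\<bar> \<le> B" using norm1_comp[of v] by (meson mem_Collect_eq order_trans)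
    then have "\<And>i. v$i \<in> {-B..B}" unfolding atLeastAtMost_iff by (meson abs_le_D1 abs_le_D2 minus_le_iff)
    then have "(\<lambda>i. v$i) \<in> PiE UNIV (\<lambda>_. {-B..B})" by (auto simp: PiE_iff)
    then show "v \<in> vec_lambda ` (PiE UNIV (\<lambda>_. {-B..B}))" by (metis image_eqI vec_lambda_eta)
  qed
  moreover have "finite (vec_lambda ` (PiE UNIV (\<lambda>_::'d. {-B..B})))" by (intro finite_imageI finite_PiE) auto
  ultimately show ?thesis by (rule finite_subset)
qed

definition uvec :: "'d \<Rightarrow> int^'d" where "uvec i = (\<chi> j. if j = i then (1::int) else 0)"

lemma norm1_uvec: "norm1 (uvec i) = 1"
  unfolding norm1_def uvec_def by (simp add: if_distrib[of abs] cong: if_cong)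

lemma dotp_uvec: "dotp \<omega> (uvec i) = \<omega>$i"
  unfolding dotp_def uvec_def by (simp add: if_distrib[of real_of_int] if_distrib[of "(*) _"] cong: if_cong)

lemma dotp_diff: "dotp \<omega> (a - b) = dotp \<omega> a - dotp \<omega> b"
  unfolding dotp_def by (simp add: algebra_simps sum_subtractf)

definition "Aset \<omega> m = (\<lambda>\<nu>. \<bar>dotp \<omega> \<nu>\<bar>) ` {\<nu>. 0 < norm1 \<nu> \<and> norm1 \<nu> \<le> 2 ^ m}"

lemma alpha_Aset: "alpha \<omega> m = Inf (Aset \<omega> m)"
  unfolding alpha_def Aset_def by (simp add: image_def) (metis (no_types, lifting))

lemma Aset_fin: "finite (Aset \<omega> m)"
  unfolding Aset_def by (rule finite_imageI, rule finite_subset[OF _ fin_norm1[of "2^m"]]) auto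

lemma Aset_ne: fixes \<omega> :: "real^'d" shows "Aset \<omega> m \<noteq> {}"
proof -
  have n: "norm1 (uvec undefined :: int^'d) = 1" by (rule norm1_uvec)
  have "(uvec undefined :: int^'d) \<in> {\<nu>. 0 < norm1 \<nu> \<and> norm1 \<nu> \<le> 2^m}" using n by (simp add: one_le_power)
  then show ?thesis unfolding Aset_def by blast
qed

lemma alpha_le: "0 < norm1 \<nu> \<Longrightarrow> norm1 \<nu> \<le> 2^m \<Longrightarrow> alpha \<omega> m \<le> \<bar>dotp \<omega> \<nu>\<bar>"
  unfolding alpha_Aset by (rule cInf_lower) (auto simp: Aset_def intro: finite_imageI bdd_below_finite Aset_fin[unfolded Aset_def])

lemma alpha_pos: assumes "bryuno \<omega>" shows "0 < alpha \<omega> m"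
proof -
  have "Inf (Aset \<omega> m) = Min (Aset \<omega> m)" using Aset_fin Aset_ne by (rule cInf_eq_Min)
  then have "alpha \<omega> m \<in> Aset \<omega> m" unfolding alpha_Aset using Min_in[OF Aset_fin Aset_ne] by simp
  then obtain \<nu> where "0 < norm1 \<nu>" "alpha \<omega> m = \<bar>dotp \<omega> \<nu>\<bar>" unfolding Aset_def by blast
  moreover have "\<nu> \<noteq> 0" using \<open>0 < norm1 \<nu>\<close> by (auto simp: norm1_def)
  ultimately show ?thesis using assms unfolding bryuno_def by auto
qed

lemma alpha_anti: assumes "m \<le> m'" shows "alpha \<omega> m' \<le> alpha \<omega> m"
  unfolding alpha_Aset
proof (rule cInf_superset_mono[OF Aset_ne])
  show "bdd_below (Aset \<omega> m')" using Aset_fin by (rule bdd_below_finite)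
  have h: "(2::int)^m \<le> 2^m'" using assms by (simp add: power_increasing)
  show "Aset \<omega> m \<subseteq> Aset \<omega> m'" unfolding Aset_def using order_trans[OF _ h] by (intro image_mono) auto
qed



lemma two_idx: assumes "CARD('d) \<ge> 2" obtains i j :: 'd where "i \<noteq> j"
proof -
  have "\<not> (\<forall>i j::'d. i = j)"
  proof
    assume "\<forall>i j::'d. i = j"
    then have h: "(UNIV::'d set) = {undefined}" by auto
    have "CARD('d) = card {undefined::'d}" by (simp only: h)
    then show False using assms by simp
  qed
  then show ?thesis using that by blast
qed

lemma alpha_small:
  fixes \<omega> :: "real^'d"
  assumes "CARD('d) \<ge> 2" "bryuno \<omega>" "\<epsilon> > 0" shows "\<exists>m. alpha \<omega> m < \<epsilon>"
proof -
  obtain i j :: 'd where ij: "i \<noteq> j" using two_idx[OF assms(1)] by blast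
  have nz: "\<omega>$t \<noteq> 0" for t
  proof -
    have "uvec t \<noteq> 0" using norm1_uvec[of t] by (auto simp: norm1_def)
    then show ?thesis using assms(2) dotp_uvec[of \<omega> t] unfolding bryuno_def by auto
  qed
  define \<theta> where "\<theta> = \<omega>$i / \<omega>$j"
  define N where "N = nat \<lceil>\<bar>\<omega>$j\<bar> / \<epsilon>\<rceil> + 1"
  have N: "N > 0" unfolding N_def by simp
  obtain h k where hk: "0 < k" "\<bar>of_int k * \<theta> - of_int h\<bar> < 1 / real N"
    using Dirichlet_approx[OF N] by blast
  define \<nu> where "\<nu> = (\<chi> t. if t = i then k else if t = j then -h else (0::int))"
  have pt: "\<omega>$t * real_of_int (\<nu>$t) = (if t = i then \<omega>$i * k else 0) + (if t = j then - (\<omega>$j * h) else 0)" for t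
    using ij unfolding \<nu>_def by auto
  have dot: "dotp \<omega> \<nu> = \<omega>$i * k - \<omega>$j * h"
    unfolding dotp_def pt by (simp add: sum.distrib)
  also have "\<dots> = \<omega>$j * (of_int k * \<theta> - of_int h)" unfolding \<theta>_def using nz[of j] by (simp add: field_simps)
  finally have "\<bar>dotp \<omega> \<nu>\<bar> = \<bar>\<omega>$j\<bar> * \<bar>of_int k * \<theta> - of_int h\<bar>" by (simp add: abs_mult)
  also have "\<dots> \<le> \<bar>\<omega>$j\<bar> * (1 / real N)" using hk(2) by (intro mult_left_mono) auto
  also have "\<dots> < \<epsilon>"
  proof -
    have "\<bar>\<omega>$j\<bar> / \<epsilon> < real N" unfolding N_def by linarith
    then have "\<bar>\<omega>$j\<bar> < \<epsilon> * real N" using assms(3) by (simp add: divide_less_eq mult.commute)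
    then show ?thesis using N by (simp add: divide_less_eq mult.commute)
  qed
  finally have small: "\<bar>dotp \<omega> \<nu>\<bar> < \<epsilon>" .
  have "\<nu>$i = k" unfolding \<nu>_def by simp
  then have pos: "0 < norm1 \<nu>" using norm1_comp[of \<nu> i] hk(1) by linarith
  define m where "m = nat (norm1 \<nu>)"
  have "norm1 \<nu> \<le> 2^m" unfolding m_def using pos
    by (metis less_imp_le of_nat_less_two_power order.strict_implies_order zero_less_imp_eq_int
        int_nat_eq less_le_trans nat_0_less_mult_iff of_nat_numeral of_nat_power order_refl)
  then have "alpha \<omega> m \<le> \<bar>dotp \<omega> \<nu>\<bar>" using alpha_le pos by blast
  then show ?thesis using small by (meson le_less_trans)
qed



lemma pnum_prop:
  fixes \<omega> :: "real^'d"
  assumes "CARD('d) \<ge> 2" "bryuno \<omega>"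
  shows "alpha \<omega> mn < 2 * alpha \<omega> (mn + pnum \<omega> mn)"
proof -
  have a0: "alpha \<omega> mn > 0" using alpha_pos[OF assms(2)] .
  obtain m where m: "alpha \<omega> m < alpha \<omega> mn / 2" using alpha_small[OF assms, of "alpha \<omega> mn / 2"] a0 by auto
  show ?thesis unfolding pnum_def
  proof (rule GreatestI_nat[where k=0 and b=m])
    show "alpha \<omega> mn < 2 * alpha \<omega> (mn + 0)" using a0 by simp
  next
    fix y assume y: "alpha \<omega> mn < 2 * alpha \<omega> (mn + y)"
    show "y \<le> m"
    proof (rule ccontr)
      assume "\<not> y \<le> m"
      then have "alpha \<omega> (mn + y) \<le> alpha \<omega> m" by (intro alpha_anti) simp
      then show False using y m by simp
    qed
  qed
qed

lemma mseq_mono: "a \<le> b \<Longrightarrow> mseq \<omega> a \<le> mseq \<omega> b"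
  by (induction b) (auto simp: le_Suc_eq)

lemma line_small:
  fixes \<omega> :: "real^'d"
  assumes "CARD('d) \<ge> 2" "bryuno \<omega>" "cutoff chi" "1 \<le> p" "p \<le> s" "PsiN chi \<omega> s x \<noteq> 0"
  shows "\<bar>x\<bar> < alpha \<omega> (mseq \<omega> p - 1) / 2"
proof -
  have s0: "s \<noteq> 0" using assms(4,5) by simp
  then have "chiN chi \<omega> (s - 1) x \<noteq> 0" using assms(6) unfolding PsiN_def by auto
  then have c: "chi (4 * x / alpha \<omega> (mseq \<omega> (s - 1))) \<noteq> 0" unfolding chiN_def .
  define a where "a = alpha \<omega> (mseq \<omega> (s - 1))"
  have apos: "a > 0" unfolding a_def using alpha_pos[OF assms(2)] .
  have "\<bar>4 * x / a\<bar> < 1" using c assms(3) unfolding cutoff_def a_def by (meson not_less)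
  then have x1: "\<bar>x\<bar> < a / 4" using apos by (simp add: abs_divide abs_mult divide_less_eq)
  have "a \<le> alpha \<omega> (mseq \<omega> (p - 1))" unfolding a_def using assms(5)
    by (intro alpha_anti mseq_mono) simp
  moreover have "alpha \<omega> (mseq \<omega> (p - 1)) < 2 * alpha \<omega> (mseq \<omega> (p - 1) + pnum \<omega> (mseq \<omega> (p - 1)))"
    by (rule pnum_prop[OF assms(1,2)])
  moreover have "mseq \<omega> p - 1 = mseq \<omega> (p - 1) + pnum \<omega> (mseq \<omega> (p - 1))"
    using assms(4) by (cases p) auto
  ultimately show ?thesis using x1 by simp
qed

lemma norm_big: "0 < norm1 \<nu> \<Longrightarrow> \<bar>dotp \<omega> \<nu>\<bar> < alpha \<omega> M \<Longrightarrow> 2^M < norm1 \<nu>"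
  using alpha_le[of \<nu> M \<omega>] by fastforce

lemma key:
  fixes \<omega> :: "real^'d"
  assumes "\<nu> \<noteq> 0" "p = 0 \<or> \<bar>dotp \<omega> \<nu>\<bar> < alpha \<omega> (mseq \<omega> p - 1)"
  shows "2 ^ mseq \<omega> p / 2 \<le> real_of_int (norm1 \<nu>)"
proof (cases "p = 0")
  case True then show ?thesis using norm1_pos[OF assms(1)] by simp
next
  case False
  then have d: "\<bar>dotp \<omega> \<nu>\<bar> < alpha \<omega> (mseq \<omega> p - 1)" using assms(2) by blast
  have "0 < norm1 \<nu>" using norm1_pos[OF assms(1)] by simp
  from norm_big[OF this d] have "(2::int)^(mseq \<omega> p - 1) \<le> norm1 \<nu>" by simp
  then have r: "(2::real)^(mseq \<omega> p - 1) \<le> real_of_int (norm1 \<nu>)"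
    by (metis of_int_le_iff of_int_numeral of_int_power)
  have "mseq \<omega> p \<ge> 1" using False by (cases p) auto
  then have "(2::real) ^ mseq \<omega> p / 2 = 2^(mseq \<omega> p - 1)"
    by (metis One_nat_def Suc_pred' less_eq_Suc_le nonzero_mult_div_cancel_left power_Suc zero_neq_numeral)
  then show ?thesis using r by simp
qed



lemma reach_exit:
  assumes tree: "is_tree V par" and TV: "T \<subseteq> V" and ex: "exiting par T = {l}" and w: "w \<in> T"
  shows "\<exists>k. up par k w = Some l"
proof -
  obtain K where K: "up par K w = None" using tree w TV unfolding is_tree_def by blast
  show ?thesis using K w
  proof (induction K arbitrary: w)
    case 0 then show ?case by simp
  next
    case (Suc K)
    show ?case
    proof (cases "w = l")
      case True then show ?thesis by (auto intro: exI[of _ 0])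
    next
      case False
      then have "w \<notin> exiting par T" using ex by blast
      then obtain u where u: "u \<in> T" "par w = Some u" using Suc.prems unfolding exiting_def by blast
      then have "up par K u = None" using Suc.prems by (simp add: up_Suc')
      from Suc.IH[OF this u(1)] obtain k where "up par k u = Some l" by blast
      then show ?thesis using u by (auto simp: up_Suc' intro: exI[of _ "Suc k"])
    qed
  qed
qed

lemma sce_lemma:
  assumes tree: "is_tree V par" and cl: "cluster V par sc n T"
    and ent: "entering V par T = {e}" and ex: "exiting par T = {l}"
  shows "sc e > n"
proof (rule ccontr)
  assume "\<not> sc e > n"
  then have sce: "sc e \<le> n" by simp
  have sls: "scale_le_sub V par sc n T" using cl unfolding cluster_def by blast
  then have TV: "T \<subseteq> V" and conn: "connected_sub par T" and lT: "\<forall>v\<in>lines_in par T. sc v \<le> n"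
    unfolding scale_le_sub_def by auto
  have e: "e \<in> V" "e \<notin> T" using ent unfolding entering_def by auto
  obtain u where u: "u \<in> T" "par e = Some u" using ent unfolding entering_def by blast
  define S' where "S' = insert e T"
  have adjmono: "(adj par T)\<^sup>*\<^sup>* a b \<Longrightarrow> (adj par S')\<^sup>*\<^sup>* a b" for a b
  proof -
    have "adj par T \<le> adj par S'" unfolding adj_def S'_def by auto
    then show "(adj par T)\<^sup>*\<^sup>* a b \<Longrightarrow> (adj par S')\<^sup>*\<^sup>* a b" using rtranclp_mono by blast
  qed
  have eu: "adj par S' e u" using u unfolding adj_def S'_def by auto
  have tou: "(adj par S')\<^sup>*\<^sup>* a u" if "a \<in> S'" for a
  proof (cases "a = e")
    case True then show ?thesis using eu by auto
  next
    case False then have "a \<in> T" using that unfolding S'_def by auto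
    then show ?thesis using conn u(1) adjmono unfolding connected_sub_def by blast
  qed
  have connS: "connected_sub par S'" unfolding connected_sub_def
  proof (intro conjI ballI)
    show "S' \<noteq> {}" unfolding S'_def by simp
  next
    fix a b assume "a \<in> S'" "b \<in> S'"
    then show "(adj par S')\<^sup>*\<^sup>* a b" using tou rtranclp_sym[of "adj par S'", OF adj_sym]
      by (meson rtranclp_trans)
  qed
  have linesS: "\<forall>v\<in>lines_in par S'. sc v \<le> n"
  proof
    fix v assume v: "v \<in> lines_in par S'"
    then obtain w where w: "v \<in> S'" "w \<in> S'" "par v = Some w" unfolding lines_in_def by blast
    show "sc v \<le> n"
    proof (cases "v = e")
      case True then show ?thesis using sce by simp
    next
      case False
      then have vT: "v \<in> T" using w unfolding S'_def by auto
      show ?thesis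
      proof (cases "w = e")
        case False
        then have "v \<in> lines_in par T" using vT w unfolding lines_in_def S'_def by auto
        then show ?thesis using lT by blast
      next
        case True
        then have "v \<in> exiting par T" using vT w e unfolding exiting_def by auto
        then have vl: "v = l" using ex by blast
        obtain k where k: "up par k u = Some l" using reach_exit[OF tree TV ex u(1)] by blast
        have "up par (k + 2) u = Some u"
          using up_add[of par k 2 u] k w(3) vl True u(2) by (simp add: numeral_2_eq_2 up_Suc')
        then have "k + 2 = 0" using up_inj[OF tree _ _ up_0[of par u]] u(1) TV by blast
        then show ?thesis by simp
      qed
    qed
  qed
  have "scale_le_sub V par sc n S'" unfolding scale_le_sub_def S'_def
    using TV e(1) connS linesS unfolding S'_def by auto
  then have "S' = T" using cl unfolding cluster_def S'_def by blast
  then show False using e(2) unfolding S'_def by blast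
qed



lemma powr_fact: "(2::real) powr (- (real m - 2)) = 4 / 2 ^ m"
proof -
  have "(2::real) powr (- (real m - 2)) = 2 powr (2 - real m)" by simp
  also have "\<dots> = 2 powr 2 / 2 powr (real m)" by (rule powr_diff)
  also have "\<dots> = 4 / 2 ^ m" by (simp add: powr_realpow)
  finally show ?thesis .
qed

theorem lemma3p5:
  fixes \<omega> :: "real^'d" and chi :: "real \<Rightarrow> real"
    and V :: "'v set" and par :: "'v \<Rightarrow> 'v option"
    and \<nu> :: "'v \<Rightarrow> int^'d" and sc :: "'v \<Rightarrow> int"
    and T :: "'v set" and n :: nat
  assumes "CARD('d) \<ge> 2"
    and "bryuno \<omega>"
    and "cutoff chi"
    and "labelled_tree V par \<nu> sc"
    and "\<forall>v\<in>V. sc v \<ge> 0 \<longrightarrow> PsiN chi \<omega> (nat (sc v)) (dotp \<omega> (mom V par \<nu> v)) \<noteq> 0"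
    and "self_energy_on V par \<nu> sc (int n) T"
    and "renormalised V par \<nu> sc T"
  shows "\<forall>p\<le>n. real (Np par sc (int p) T)
            \<le> 2 powr (- (real (mseq \<omega> p) - 2)) * real_of_int (Kf \<nu> T)"
proof (intro allI impI)
  fix p assume pn: "p \<le> n"
  obtain l e where cl: "cluster V par sc (int n) T" and ent: "entering V par T = {e}"
    and ex: "exiting par T = {l}"
    using assms(6) unfolding self_energy_on_def by blast
  have tree: "is_tree V par" using assms(4) unfolding labelled_tree_def by blast
  have TV: "T \<subseteq> V" using cl unfolding cluster_def scale_le_sub_def by blast
  have sce: "sc e > int n" by (rule sce_lemma[OF tree cl ent ex])
  define E where "E = (2::real) ^ mseq \<omega> p / 2"
  have Epos: "E > 0" unfolding E_def by simp
  have momnz: "mom V par \<nu> v \<noteq> 0" if "v \<in> V" "par v \<noteq> None" for v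
    using assms(4) that unfolding labelled_tree_def by blast
  have small: "\<bar>dotp \<omega> (mom V par \<nu> v)\<bar> < alpha \<omega> (mseq \<omega> p - 1) / 2"
    if "v \<in> V" "sc v \<ge> int p" "p \<noteq> 0" for v
  proof -
    have "PsiN chi \<omega> (nat (sc v)) (dotp \<omega> (mom V par \<nu> v)) \<noteq> 0" using assms(5) that by auto
    moreover have "p \<le> nat (sc v)" using that by simp
    moreover have "1 \<le> p" using that by simp
    ultimately show ?thesis using line_small[OF assms(1,2,3)] by blast
  qed
  have apos: "alpha \<omega> (mseq \<omega> p - 1) > 0" using alpha_pos[OF assms(2)] .
  have I: "brj V par \<nu> sc T (int p) e E"
  proof (unfold_locales)
    show "is_tree V par" by (rule tree)
    show "labelled_tree V par \<nu> sc" by (rule assms(4))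
    show "T \<subseteq> V" by (rule TV)
    show "entering V par T = {e}" by (rule ent)
    show "int p \<le> sc e" using sce pn by simp
    show "renormalised V par \<nu> sc T" by (rule assms(7))
  next
    fix v assume v: "v \<in> V" "par v \<noteq> None" "int p \<le> sc v"
    show "E \<le> real_of_int (norm1 (mom V par \<nu> v))" unfolding E_def
    proof (rule key[OF momnz[OF v(1,2)]])
      show "p = 0 \<or> \<bar>dotp \<omega> (mom V par \<nu> v)\<bar> < alpha \<omega> (mseq \<omega> p - 1)"
        using small[OF v(1,3)] apos by force
    qed
  next
    fix v x assume v: "v \<in> V" "x \<in> V" "par v \<noteq> None" "par x \<noteq> None" "int p \<le> sc v" "int p \<le> sc x"
      "mom V par \<nu> v \<noteq> mom V par \<nu> x"
    show "E \<le> real_of_int (norm1 (mom V par \<nu> v - mom V par \<nu> x))" unfolding E_def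
    proof (rule key)
      show "mom V par \<nu> v - mom V par \<nu> x \<noteq> 0" using v(7) by simp
      show "p = 0 \<or> \<bar>dotp \<omega> (mom V par \<nu> v - mom V par \<nu> x)\<bar> < alpha \<omega> (mseq \<omega> p - 1)"
      proof (cases "p = 0")
        case False
        have "\<bar>dotp \<omega> (mom V par \<nu> v - mom V par \<nu> x)\<bar>
            \<le> \<bar>dotp \<omega> (mom V par \<nu> v)\<bar> + \<bar>dotp \<omega> (mom V par \<nu> x)\<bar>"
          unfolding dotp_diff by simp
        then show ?thesis using small[OF v(1,5) False] small[OF v(2,6) False] by simp
      qed simp
    qed
  qed
  have main: "real (card {v \<in> lines_in par T. sc v \<ge> int p}) * E \<le> 2 * real_of_int (Kf \<nu> T)"
    using brj.main_loc2[OF I] Epos by simp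
  have "real (Np par sc (int p) T) \<le> 2 * real_of_int (Kf \<nu> T) / E"
    using main Epos unfolding Np_def by (simp add: le_divide_eq)
  also have "\<dots> = 2 powr (- (real (mseq \<omega> p) - 2)) * real_of_int (Kf \<nu> T)"
    unfolding powr_fact E_def by simp
  finally show "real (Np par sc (int p) T) \<le> 2 powr (- (real (mseq \<omega> p) - 2)) * real_of_int (Kf \<nu> T)" .
qed


end
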